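(* For all real numbers $a,b,c>0$, \[ 2(a+b+c)^{3/2} \leq \left(\sqrt{a+b} + \sqrt{b+c} + \sqrt{c+a}\right) \sqrt{a^2+b^2+c^2+ab+bc+ca}. \] *)

theory Defs
  imports Complex_Main
begin

end

theory Submission
  imports Defs
begin

lemma key:
  fixes x y z :: real
  assumes "x \<ge> 0" "y \<ge> 0" "z \<ge> 0" "x^2+y^2+z^2 > 0"
  shows "(x^2+y^2+z^2)^3 \<le> (x+y+z)^2 * (x^4+y^4+z^4)"
proof -
  let ?P = "x^2+y^2+z^2"
  have c1: "?P^2 \<le> (x+y+z)*(x^3+y^3+z^3)"
  proof -
    have "(x+y+z)*(x^3+y^3+z^3) - ?P^2 = x*y*(x-y)^2 + y*z*(y-z)^2 + z*x*(z-x)^2"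
      by algebra
    moreover have "x*y*(x-y)^2 + y*z*(y-z)^2 + z*x*(z-x)^2 \<ge> 0"
      using assms by (intro add_nonneg_nonneg mult_nonneg_nonneg) auto
    ultimately show ?thesis by linarith
  qed
  have c2: "(x^3+y^3+z^3)^2 \<le> ?P*(x^4+y^4+z^4)"
  proof -
    have "?P*(x^4+y^4+z^4) - (x^3+y^3+z^3)^2 = (x*y)^2*(x-y)^2 + (y*z)^2*(y-z)^2 + (z*x)^2*(z-x)^2"
      by algebra
    moreover have "(x*y)^2*(x-y)^2 + (y*z)^2*(y-z)^2 + (z*x)^2*(z-x)^2 \<ge> 0"
      by (intro add_nonneg_nonneg mult_nonneg_nonneg) auto
    ultimately show ?thesis by linarith
  qed
  have "?P^4 = (?P^2)^2" by simp
  also have "\<dots> \<le> ((x+y+z)*(x^3+y^3+z^3))^2"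
    using c1 by (intro power_mono) auto
  also have "\<dots> = (x+y+z)^2 * (x^3+y^3+z^3)^2" by (simp add: power_mult_distrib)
  also have "\<dots> \<le> (x+y+z)^2 * (?P*(x^4+y^4+z^4))"
    using c2 by (intro mult_left_mono) auto
  finally have "?P * ?P^3 \<le> ?P * ((x+y+z)^2 * (x^4+y^4+z^4))"
    by (simp add: power_numeral_reduce algebra_simps)
  thus ?thesis using assms(4) by simp
qed

theorem mainTheorem6:
  fixes a b c :: real
  assumes "a > 0" and "b > 0" and "c > 0"
  shows "2 * (a + b + c) powr (3/2) \<le>
    (sqrt (a + b) + sqrt (b + c) + sqrt (c + a)) * sqrt (a^2 + b^2 + c^2 + a*b + b*c + c*a)"
proof -
  define x where "x = sqrt (a+b)"
  define y where "y = sqrt (b+c)"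
  define z where "z = sqrt (c+a)"
  define s where "s = a+b+c"
  define Q where "Q = a^2 + b^2 + c^2 + a*b + b*c + c*a"
  have x2: "x^2 = a+b" unfolding x_def using assms by simp
  have y2: "y^2 = b+c" unfolding y_def using assms by simp
  have z2: "z^2 = c+a" unfolding z_def using assms by simp
  have xyz: "x \<ge> 0" "y \<ge> 0" "z \<ge> 0" unfolding x_def y_def z_def using assms by auto
  have s0: "s > 0" unfolding s_def using assms by simp
  have Q0: "Q \<ge> 0" unfolding Q_def using assms by (simp add: add_nonneg_nonneg)
  have P: "x^2+y^2+z^2 = 2*s" unfolding s_def using x2 y2 z2 by simp
  have x4: "x^4 = (a+b)^2" using x2 by (metis power2_eq_square power_mult numeral_Bit0 numeral_One mult_2)
  have y4: "y^4 = (b+c)^2" using y2 by (metis power2_eq_square power_mult numeral_Bit0 numeral_One mult_2)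
  have z4: "z^4 = (c+a)^2" using z2 by (metis power2_eq_square power_mult numeral_Bit0 numeral_One mult_2)
  have Q4: "x^4+y^4+z^4 = 2*Q" unfolding Q_def x4 y4 z4 by (simp add: power2_eq_square algebra_simps)
  have k: "(2*s)^3 \<le> (x+y+z)^2 * (2*Q)"
    using key[OF xyz] P Q4 s0 by (simp del: power_numeral_reduce)
  have pw: "s powr (3/2) = s * sqrt s"
  proof -
    have "s powr (3/2) = s powr (1 + 1/2)" by simp
    also have "\<dots> = s * s powr (1/2)" using s0 by (simp only: powr_add powr_one)
    also have "\<dots> = s * sqrt s" using s0 by (simp add: powr_half_sqrt)
    finally show ?thesis .
  qed
  have "(2 * s * sqrt s)^2 = 4 * s^3" using s0 by (simp add: power_mult_distrib power2_eq_square power3_eq_cube algebra_simps)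
  also have "\<dots> \<le> (x+y+z)^2 * Q" proof -
    have e1: "(2*s)^3 = 8*s^3" by (simp add: power_mult_distrib)
    have e2: "(x+y+z)^2 * (2*Q) = 2*((x+y+z)^2*Q)" by (simp only: mult.left_commute)
    show ?thesis using k e1 e2 by linarith
  qed
  also have "\<dots> = ((x+y+z) * sqrt Q)^2" using Q0 by (simp add: power_mult_distrib)
  finally have sq: "(2 * s * sqrt s)^2 \<le> ((x+y+z) * sqrt Q)^2" .
  have nn: "0 \<le> (x+y+z) * sqrt Q" using xyz Q0 by simp
  have "2 * s * sqrt s \<le> (x+y+z) * sqrt Q" by (rule power2_le_imp_le[OF sq nn])
  hence "2 * s powr (3/2) \<le> (x+y+z) * sqrt Q" unfolding pw by (simp add: mult.assoc)
  thus ?thesis unfolding s_def x_def y_def z_def Q_def .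
qed

end
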